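(* Let $q$ be a power of an odd prime, $c\in\mathbb{F}_q^*$, and $f(X)=c(X^{q+1}-X^2)$ on $\mathbb{F}_{q^2}$. The functional graph of $f$ has exactly $\frac{q-1}{2}$ cycles of length two.
   Context: The functional graph of $f$ is the directed graph on $\mathbb{F}_{q^2}$ with edges $x\to f(x)$. *)

theory Defs
  imports Main "HOL-Computational_Algebra.Primes"
begin

text \<open>Cycles of length two in the functional graph of f (the directed graph on the
  type with edges x -> f x): each such cycle is the two-element vertex set {x, f x}
  where f (f x) = x and f x \<noteq> x.\<close>
definition two_cycles :: "('a \<Rightarrow> 'a) \<Rightarrow> 'a set set" where
  "two_cycles f = {{x, f x} | x. f (f x) = x \<and> f x \<noteq> x}"

end

theory Submission
  imports Defs "HOL-Number_Theory.Residues" "HOL-Computational_Algebra.Polynomial"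
begin

lemma power_card_field:
  fixes x :: "'a :: {field, finite}"
  shows "x ^ card (UNIV :: 'a set) = x"
proof (cases "x = 0")
  case False
  have "x * (\<Prod>y\<in>UNIV-{0}. x * y) = x * x ^ (card (UNIV :: 'a set) - 1) * \<Prod>(UNIV-{0})"
    by (simp add: prod.distrib mult_ac)
  also have "x * x ^ (card (UNIV :: 'a set) - 1) = x ^ Suc (card (UNIV :: 'a set) - 1)"
    by (subst power_Suc) auto
  also have "Suc (card (UNIV :: 'a set) - 1) = card (UNIV :: 'a set)"
    using finite_UNIV_card_ge_0[where ?'a = 'a] by simp
  also have "(\<Prod>y\<in>UNIV-{0}. x * y) = (\<Prod>y\<in>UNIV-{0}. y)"
    by (rule prod.reindex_bij_witness[of _ "\<lambda>y. y / x" "\<lambda>y. x * y"]) (use False in auto)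
  finally show ?thesis
    by simp
qed (use finite_UNIV_card_ge_0[where ?'a = 'a] in auto)

lemma char_eq:
  fixes p k q :: nat
  assumes "prime p" "q = p ^ k" "card (UNIV :: 'a :: {field, finite} set) = q ^ 2"
  shows "CHAR('a) = p"
proof -
  have pos: "CHAR('a) > 0" by (rule finite_imp_CHAR_pos) simp
  have chp: "prime CHAR('a)" using prime_CHAR_semidom pos by blast
  have "CHAR('a) dvd p ^ (k * 2)" using CHAR_dvd_CARD[where 'a='a] assms
    by (simp add: power_mult)
  hence "CHAR('a) dvd p" using chp prime_dvd_power by blast
  thus ?thesis using chp assms(1) by (simp add: primes_dvd_imp_eq)
qed


theorem corollary10:
  fixes c :: "'a :: {field, finite}" and p k q :: nat
  assumes "prime p" and "odd p" and "k \<ge> 1" and "q = p ^ k"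
    and "card (UNIV :: 'a set) = q ^ 2"
    and "c \<noteq> 0" and "c ^ q = c"
  shows "card (two_cycles (\<lambda>x. c * (x ^ (q + 1) - x ^ 2))) = (q - 1) div 2"
proof -
  have CH: "CHAR('a) = p" using char_eq assms(1,4,5) by blast
  have p2: "p \<ge> 2" using prime_ge_2_nat[OF assms(1)] .
  have "p \<noteq> 2" using assms(2) by auto
  hence p3: "p \<ge> 3" using p2 by linarith
  have "p ^ 1 \<le> p ^ k" using power_increasing[of 1 k p] assms(3) p2 by simp
  hence qge: "q \<ge> 3" using assms(4) p3 by simp
  define bar where "bar x = x ^ q" for x :: 'a
  have add: "bar (x + y) = bar x + bar y" for x y
    unfolding bar_def using freshmans_dream'[where 'a='a, of q k x y] CH assms by simp
  have zero: "bar 0 = 0" using qge by (simp add: bar_def)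
  have neg: "bar (- x) = - bar x" for x
    using add[of x "-x"] zero by (metis add.right_inverse neg_eq_iff_add_eq_0)
  have diff: "bar (x - y) = bar x - bar y" for x y
    using add[of x "-y"] neg[of y] by simp
  have mul: "bar (x * y) = bar x * bar y" for x y
    by (simp add: bar_def power_mult_distrib)
  have inv: "bar (inverse x) = inverse (bar x)" for x
    by (simp add: bar_def power_inverse)
  have pw: "bar (x ^ n) = bar x ^ n" for x n
    by (simp add: bar_def flip: power_mult) (simp add: mult.commute)
  have one: "bar 1 = 1" by (simp add: bar_def)
  have two: "bar 2 = 2" using add[of 1 1] one by (simp add: one_add_one)
  have barc: "bar c = c" using assms(7) by (simp add: bar_def)
  have invol: "bar (bar x) = x" for x
    using power_card_field[of x] assms(5) by (simp add: bar_def flip: power_mult) (simp add: power2_eq_square)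
  have two_ne: "(2::'a) \<noteq> 0"
  proof
    assume "(2::'a) = 0"
    hence "of_nat 2 = (0::'a)" by simp
    hence "p dvd 2" using CH of_nat_eq_0_iff_char_dvd by metis
    hence "p \<le> 2" using dvd_imp_le[of p 2] by simp
    thus False using p3 by simp
  qed
  have two_inv: "bar (inverse 2) = inverse 2" using inv[of 2] two by simp
  define M where "M = {t. bar t = - t}"
  define K where "K = {t. bar t = t}"
  have "\<exists>x0. bar x0 \<noteq> x0"
  proof (rule ccontr)
    assume "\<not> (\<exists>x0. bar x0 \<noteq> x0)"
    hence all: "\<forall>x. bar x = x" by simp
    define P :: "'a poly" where "P = monom 1 q + [:0, - 1:]"
    have degm: "degree (monom (1::'a) q) = q" by (simp add: degree_monom_eq)
    have degP: "degree P = q" unfolding P_def using qge degm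
      by (subst degree_add_eq_left) auto
    hence "P \<noteq> 0" using qge by auto
    hence "card {x. poly P x = 0} \<le> q" using card_poly_roots_bound degP by metis
    moreover have "{x. poly P x = 0} = UNIV" using all
      by (auto simp: P_def poly_monom bar_def)
    ultimately have "q ^ 2 \<le> q" using assms(5) by simp
    thus False using qge by (simp add: power2_eq_square)
  qed
  then obtain x0 where x0: "bar x0 \<noteq> x0" by blast
  define \<delta> where "\<delta> = bar x0 - x0"
  have dnz: "\<delta> \<noteq> 0" using x0 by (simp add: \<delta>_def)
  have bd: "bar \<delta> = - \<delta>" by (simp add: \<delta>_def diff invol)
  have "bij_betw (\<lambda>k. \<delta> * k) K M"
  proof (rule bij_betw_byWitness[where f'="\<lambda>m. m / \<delta>"])
    show "\<forall>a\<in>K. \<delta> * a / \<delta> = a" using dnz by simp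
    show "\<forall>a\<in>M. \<delta> * (a / \<delta>) = a" using dnz by simp
    show "(*) \<delta> ` K \<subseteq> M" by (auto simp: K_def M_def mul bd)
    show "(\<lambda>m. m / \<delta>) ` M \<subseteq> K"
      by (auto simp: K_def M_def divide_inverse mul inv bd)
  qed
  hence cKM: "card K = card M" by (rule bij_betw_same_card)
  have l1: "\<forall>a\<in>K \<times> M. (\<lambda>y. ((y + bar y) / 2, (y - bar y) / 2)) ((\<lambda>(a, b). a + b) a) = a"
    using two_ne by (auto simp: K_def M_def add field_simps)
  have l2: "\<forall>a'\<in>UNIV. (\<lambda>(a, b). a + b) ((a' + bar a') / 2, (a' - bar a') / 2) = a'"
  proof
    fix a :: 'a
    have "(a + bar a) / 2 + (a - bar a) / 2 = ((a + bar a) + (a - bar a)) / 2"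
      by (rule add_divide_distrib[symmetric])
    also have "(a + bar a) + (a - bar a) = 2 * a" by (simp add: algebra_simps mult_2)
    also have "2 * a / 2 = a" using two_ne by simp
    finally show "(\<lambda>(a, b). a + b) ((a + bar a) / 2, (a - bar a) / 2) = a" by simp
  qed
  have l3: "(\<lambda>y. ((y + bar y) / 2, (y - bar y) / 2)) ` UNIV \<subseteq> K \<times> M"
  proof
    fix z assume "z \<in> (\<lambda>y. ((y + bar y) / 2, (y - bar y) / 2)) ` UNIV"
    then obtain y where z: "z = ((y + bar y) / 2, (y - bar y) / 2)" by blast
    have bd2: "bar (a / 2) = bar a / 2" for a
      by (simp only: divide_inverse mul two_inv)
    have h1: "bar ((y + bar y) / 2) = (y + bar y) / 2"
      by (simp only: bd2 add invol add.commute)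
    have "bar ((y - bar y) / 2) = (bar y - y) / 2"
      by (simp only: bd2 diff invol)
    also have "\<dots> = - ((y - bar y) / 2)" by (simp add: minus_divide_left)
    finally have h2: "bar ((y - bar y) / 2) = - ((y - bar y) / 2)" .
    show "z \<in> K \<times> M" using h1 h2 by (simp add: z K_def M_def)
  qed
  have "bij_betw (\<lambda>(a, b). a + b) (K \<times> M) UNIV"
    by (rule bij_betw_byWitness[where f'="\<lambda>y. ((y + bar y) / 2, (y - bar y) / 2)", OF l1 l2 _ l3]) simp
  hence "card (K \<times> M) = card (UNIV :: 'a set)" by (rule bij_betw_same_card)
  hence "card M * card M = q * q" using cKM assms(5) by (simp add: card_cartesian_product power2_eq_square)
  hence cM: "card M = q" using power_eq_iff_eq_base[of 2 "card M" q] by (simp add: power2_eq_square)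
  have "0 \<in> M" by (simp add: M_def zero)
  hence cM0: "card (M - {0}) = q - 1" using cM by simp
  define F where "F = (\<lambda>x::'a. c * (x ^ (q + 1) - x ^ 2))"
  have Fx: "F x = c * x * (bar x - x)" for x
    by (simp add: F_def bar_def power2_eq_square algebra_simps)
  have bF: "bar (F x) = c * bar x * (x - bar x)" for x
    by (simp add: Fx mul diff invol barc)
  have FF: "F (F x) = - (c ^ 3 * (bar x - x) ^ 2 * (x + bar x)) * x" for x
    by (simp only: Fx[of "F x"] bF) (simp add: Fx power2_eq_square power3_eq_cube algebra_simps)
  define P where "P = {x. F (F x) = x \<and> F x \<noteq> x}"
  define g where "g t = (- inverse (c ^ 3 * t ^ 2) - t) / 2" for t
  have A: "bar (g t) - g t = t \<and> g t \<in> P" if tM: "t \<in> M" and tnz: "t \<noteq> 0" for t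
  proof -
    have bt: "bar t = - t" using tM by (simp add: M_def)
    define S where "S = - inverse (c ^ 3 * t ^ 2)"
    have bS: "bar S = S" unfolding S_def by (simp only: neg inv mul pw barc bt) simp
    define x where "x = g t"
    have x2: "2 * x = S - t" unfolding x_def g_def S_def using two_ne by simp
    have "bar (2 * x) = S + t" unfolding x2 by (simp only: diff bS bt) simp
    hence b2: "2 * bar x = S + t" by (simp only: mul two)
    have "2 * (bar x - x) = 2 * t" using x2 b2 by (simp add: right_diff_distrib)
    hence T: "bar x - x = t" using two_ne mult_left_cancel by blast
    have "2 * (x + bar x) = 2 * S" using x2 b2 by (simp add: distrib_left)
    hence Sx: "x + bar x = S" using two_ne mult_left_cancel by blast
    have xnz: "x \<noteq> 0"
    proof
      assume "x = 0"
      hence "bar x = 0" by (simp add: zero)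
      with \<open>x = 0\<close> T show False using tnz by simp
    qed
    have ct: "c ^ 3 * t ^ 2 \<noteq> 0" using assms(6) tnz by simp
    have "c ^ 3 * (bar x - x) ^ 2 * (x + bar x) = - 1"
      unfolding T Sx S_def using ct by (simp add: field_simps)
    hence FFx: "F (F x) = x" by (simp add: FF)
    have "F x \<noteq> x"
    proof
      assume "F x = x"
      hence "c * x * t = 1 * x" by (simp add: Fx T)
      hence "c * t = 1" using xnz by (metis mult.commute mult.left_commute mult_cancel_left)
      hence "t = inverse c" by (metis inverse_unique)
      hence "bar t = t" by (simp add: inv barc)
      hence "t = - t" using bt by simp
      hence "2 * t = 0" by (metis mult_2 right_minus)
      thus False using tnz two_ne by simp
    qed
    thus ?thesis using FFx T by (simp add: P_def x_def)
  qed
  have F0: "F 0 = 0" by (simp add: F_def)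
  have B: "bar x - x \<in> M - {0} \<and> g (bar x - x) = x" if xP: "x \<in> P" for x
  proof -
    have FFx: "F (F x) = x" and Fne: "F x \<noteq> x" using xP by (auto simp: P_def)
    define t where "t = bar x - x"
    have bt: "bar t = - t" by (simp add: t_def diff invol)
    have xnz: "x \<noteq> 0" using Fne F0 by auto
    have "- (c ^ 3 * t ^ 2 * (x + bar x)) * x = 1 * x" using FFx FF[of x] by (simp add: t_def)
    hence e: "- (c ^ 3 * t ^ 2 * (x + bar x)) = 1" using xnz by (metis mult_cancel_right)
    hence tnz: "t \<noteq> 0" by auto
    have ct: "c ^ 3 * t ^ 2 \<noteq> 0" using assms(6) tnz by simp
    have "c ^ 3 * t ^ 2 * (- (x + bar x)) = 1" using e by (simp only: mult_minus_right)
    hence "inverse (c ^ 3 * t ^ 2) = - (x + bar x)" by (rule inverse_unique)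
    hence "x + bar x = - inverse (c ^ 3 * t ^ 2)" by simp
    hence "g t = ((x + bar x) - (bar x - x)) / 2" by (simp add: g_def t_def)
    also have "\<dots> = x" using two_ne by (simp add: field_simps)
    finally show ?thesis using bt tnz by (simp add: M_def t_def)
  qed
  have "bij_betw g (M - {0}) P"
    by (rule bij_betw_byWitness[where f'="\<lambda>x. bar x - x"]) (use A B in auto)
  hence cP: "card P = q - 1" using cM0 by (simp add: bij_betw_same_card)
  have FP: "F x \<in> P" if "x \<in> P" for x using that by (auto simp: P_def)
  have TC: "two_cycles F = (\<lambda>x. {x, F x}) ` P" by (auto simp: two_cycles_def P_def)
  have U: "\<Union> (two_cycles F) = P" unfolding TC using FP by auto
  have pd: "pairwise disjnt (two_cycles F)"
  proof (rule pairwiseI)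
    fix A B assume "A \<in> two_cycles F" "B \<in> two_cycles F" and ne: "A \<noteq> B"
    then obtain x y where xP: "x \<in> P" and yP: "y \<in> P" and A: "A = {x, F x}" and B: "B = {y, F y}"
      unfolding TC by blast
    have fx: "F (F x) = x" and fy: "F (F y) = y" using xP yP by (auto simp: P_def)
    show "disjnt A B"
    proof (rule ccontr)
      assume "\<not> disjnt A B"
      hence "x = y \<or> x = F y \<or> F x = y \<or> F x = F y" by (auto simp: A B disjnt_def)
      hence "A = B"
      proof (elim disjE)
        assume "x = y" thus "A = B" by (simp add: A B)
      next
        assume h: "x = F y" hence "F x = y" using fy by simp
        thus "A = B" using h by (auto simp: A B)
      next
        assume h: "F x = y" hence "F y = x" using fx by simp
        thus "A = B" using h by (auto simp: A B)
      next
        assume h: "F x = F y" hence "x = y" using fx fy by metis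
        thus "A = B" by (simp add: A B)
      qed
      thus False using ne by simp
    qed
  qed
  have c2: "card A = 2" if "A \<in> two_cycles F" for A using that unfolding TC by (auto simp: P_def)
  have "card P = sum card (two_cycles F)"
    using card_Union_disjoint[OF pd] U by (metis finite)
  also have "\<dots> = 2 * card (two_cycles F)" using c2 by simp
  finally have "q - 1 = 2 * card (two_cycles F)" using cP by simp
  thus ?thesis unfolding F_def by simp
qed

end
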